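(* Under the hypotheses of Theorem 4 with $k>1$ — i.e. $J\subseteq A_n$ a cyclic code with parity-check polynomial $\prod_{i=1}^t h_i$, $c(x)=\prod_{j=1}^k h_{i_j}(x)$ with every $h_{i_j}$ of degree $m_{i_j}$ and order $n_{i_j}\ne q^{m_{i_j}}-1$, $C$ the set of elements of $J$ with minimal polynomial $c$, $n_c=\mathrm{lcm}(n_{i_1},\dots,n_{i_k})$, $d_c=\gcd(q-1,n_c)$, $r_c=n_c/d_c$, $b_c=(q-1)/d_c$, $s_c$ the number of cycles in $C$ and $R_c$ the number of proportionality classes in $C$ — all vectors of $C$ have the same Hamming weight provided at least one of the following holds: (1) $s_c=b_c$; (2) $r_c=R_c$; (3) $\gcd(s_c,R_c)=1$.
   Context: Let $q>2$ be a prime power, $n\ge1$ with $\gcd(n,q)=1$, $A_n=GF(q)[x]/(x^n-1)$ with elements identified with coefficient vectors of polynomials of degree $<n$; Hamming weight = number of nonzero coefficients. $h_i$ are distinct monic irreducible polynomials; the order of $f$ with $f(0)\neq0$ is the least $e\ge1$ with $f\mid x^e-1$. Proportionality class of nonzero $z$: $\{\alpha z:\alpha\in GF(q)^*\}$; cycle: $\{x^iz:i\ge0\}$; minimal polynomial of $z$: $(x^n-1)/\gcd(z(x),x^n-1)$. *)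

theory Defs
  imports "HOL-Computational_Algebra.Computational_Algebra" "HOL-Library.Cardinality"
begin

definition xn1 :: "nat \<Rightarrow> 'a::field poly" where
  "xn1 n = monom 1 n - 1"

definition poly_ord :: "'a::field poly \<Rightarrow> nat" where
  "poly_ord f = (LEAST e. e \<ge> 1 \<and> f dvd xn1 e)"

definition hweight :: "'a::zero poly \<Rightarrow> nat" where
  "hweight z = card {i. coeff z i \<noteq> 0}"

text \<open>Cyclic code of length n with parity-check polynomial h, elements of A_n
  represented by polynomials of degree < n.\<close>
definition code_with_check :: "nat \<Rightarrow> 'a::field poly \<Rightarrow> 'a poly set" where
  "code_with_check n h = {a. degree a < n \<and> xn1 n dvd a * h}"

definition min_poly_An :: "nat \<Rightarrow> 'a::field_gcd poly \<Rightarrow> 'a poly" where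
  "min_poly_An n z = xn1 n div gcd z (xn1 n)"

definition cycle_An :: "nat \<Rightarrow> 'a::field poly \<Rightarrow> 'a poly set" where
  "cycle_An n z = {(monom 1 i * z) mod xn1 n | i. True}"

definition prop_class :: "'a::field poly \<Rightarrow> 'a poly set" where
  "prop_class z = {smult \<alpha> z | \<alpha>. \<alpha> \<noteq> 0}"

end

theory Submission
  imports Defs
begin


lemma xn1_nz: "n \<ge> 1 \<Longrightarrow> xn1 n \<noteq> (0::'a::field poly)"
proof
  assume "n \<ge> 1" "xn1 n = (0::'a poly)"
  then have "coeff (xn1 n) n = (0::'a)" by simp
  with \<open>n \<ge> 1\<close> show False by (simp add: xn1_def coeff_monom)
qed

lemma degree_xn1: "n \<ge> 1 \<Longrightarrow> degree (xn1 n :: 'a::field poly) = n"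
  unfolding xn1_def using degree_add_eq_left[of "-1" "monom (1::'a) n"]
  by (simp add: degree_monom_eq)

lemma xn1_0[simp]: "xn1 0 = 0"
  by (simp add: xn1_def monom_0 one_pCons)

lemma pow_minus_one_dvd: "(y - 1) dvd (y ^ m - (1::'b::comm_ring_1))"
proof (induction m)
  case 0 then show ?case by simp
next
  case (Suc m)
  have "y ^ Suc m - 1 = y * (y ^ m - 1) + (y - 1)" by (simp add: algebra_simps)
  show ?case by (simp only: \<open>y ^ Suc m - 1 = _\<close>) (intro dvd_add dvd_mult Suc dvd_refl)
qed

lemma xn1_dvd_mult: "xn1 a dvd (xn1 (a*m) :: 'a::field poly)"
proof -
  have "monom (1::'a) (a*m) = (monom 1 a)^m" by (simp add: monom_power)
  then show ?thesis unfolding xn1_def using pow_minus_one_dvd by metis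
qed

lemma xn1_split: "xn1 (r + s) = monom 1 r * xn1 s + (xn1 r :: 'a::field poly)"
  by (simp add: xn1_def algebra_simps mult_monom)

lemma poly_ord_dvd_iff:
  fixes h :: "'a::field poly"
  assumes "N \<ge> 1" "h dvd xn1 N"
  shows "h dvd xn1 e \<longleftrightarrow> poly_ord h dvd e"
    and "poly_ord h \<ge> 1"
proof -
  define o' where "o' = poly_ord h"
  have o: "o' \<ge> 1 \<and> h dvd xn1 o'"
    unfolding o'_def poly_ord_def by (rule LeastI[of _ N]) (use assms in auto)
  then show "poly_ord h \<ge> 1" by (simp add: o'_def)
  have hq: "h dvd xn1 ((e div o') * o')"
    using o xn1_dvd_mult[of o' "e div o'"] dvd_trans by (metis mult.commute)
  have e: "xn1 e = monom 1 (e mod o') * xn1 ((e div o') * o') + xn1 (e mod o')"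
    using xn1_split[of "e mod o'" "(e div o') * o'"] by simp
  have "h dvd xn1 e \<longleftrightarrow> h dvd xn1 (e mod o')"
    unfolding e using hq by (metis dvd_add_right_iff dvd_mult)
  also have "\<dots> \<longleftrightarrow> e mod o' = 0"
  proof
    assume a: "h dvd xn1 (e mod o')"
    show "e mod o' = 0"
    proof (rule ccontr)
      assume "e mod o' \<noteq> 0"
      have L: "\<And>m. 1 \<le> m \<and> h dvd xn1 m \<Longrightarrow> o' \<le> m"
        unfolding o'_def poly_ord_def by (rule Least_le)
      have "o' \<le> e mod o'" using a \<open>e mod o' \<noteq> 0\<close> by (intro L) simp
      moreover have "e mod o' < o'" using o by simp
      ultimately show False by simp
    qed
  qed simp
  finally show "h dvd xn1 e \<longleftrightarrow> poly_ord h dvd e" by (simp add: o'_def dvd_eq_mod_eq_0)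
qed

lemma coprime_x_xn1: "n \<ge> 1 \<Longrightarrow> coprime (monom 1 j) (xn1 n :: 'a::field_gcd poly)"
proof -
  assume n: "n \<ge> 1"
  have "coprime (monom 1 1) (xn1 n :: 'a poly)"
  proof (rule coprimeI)
    fix d :: "'a poly" assume d1: "d dvd monom 1 1" and d2: "d dvd xn1 n"
    have "monom (1::'a) n = monom 1 1 * monom 1 (n - 1)" using n by (simp add: mult_monom)
    then have "d dvd monom 1 n" using d1 by simp
    then have "d dvd monom 1 n - xn1 n" using d2 by (rule dvd_diff)
    then show "is_unit d" by (simp add: xn1_def)
  qed
  moreover have "monom (1::'a) j = (monom 1 1)^j" by (simp add: monom_power)
  ultimately show ?thesis by simp
qed


lemma minpoly_dvd_iff:
  fixes z E :: "'a::field_gcd poly"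
  assumes n: "n \<ge> 1"
  shows "xn1 n dvd E * z \<longleftrightarrow> min_poly_An n z dvd E"
proof -
  define f :: "'a poly" where "f = xn1 n"
  define g where "g = gcd z f"
  have f0: "f \<noteq> 0" using xn1_nz[OF n] by (simp add: f_def)
  then have g0: "g \<noteq> 0" by (simp add: g_def)
  have ff: "f = g * (f div g)" by (simp add: g_def)
  have zz: "z = g * (z div g)" by (simp add: g_def)
  have cop: "coprime (z div g) (f div g)" unfolding g_def using f0 by (intro div_gcd_coprime) simp
  have "f dvd E * z \<longleftrightarrow> g * (f div g) dvd g * (E * (z div g))"
    using ff zz by (metis mult.left_commute)
  also have "\<dots> \<longleftrightarrow> (f div g) dvd E * (z div g)" using g0 by simp
  also have "\<dots> \<longleftrightarrow> (f div g) dvd E" using cop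
    by (simp add: coprime_dvd_mult_left_iff coprime_commute)
  finally show ?thesis by (simp add: min_poly_An_def f_def g_def)
qed

lemma shift_eq_iff:
  fixes z :: "'a::field_gcd poly"
  assumes n: "n \<ge> 1" and ji: "j \<le> i"
  shows "(monom 1 i * z) mod xn1 n = (monom 1 j * z) mod xn1 n \<longleftrightarrow> min_poly_An n z dvd xn1 (i - j)"
proof -
  have "monom (1::'a) i = monom 1 j * monom 1 (i - j)" using ji by (simp add: mult_monom)
  then have d: "monom 1 i * z - monom 1 j * z = monom 1 j * (xn1 (i - j) * z)"
    by (simp add: xn1_def algebra_simps)
  have "(monom 1 i * z) mod xn1 n = (monom 1 j * z) mod xn1 n \<longleftrightarrow>
      xn1 n dvd monom 1 j * (xn1 (i - j) * z)"
    unfolding d[symmetric] by (rule mod_eq_dvd_iff)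
  also have "\<dots> \<longleftrightarrow> xn1 n dvd xn1 (i - j) * z"
    using coprime_x_xn1[OF n, of j] coprime_dvd_mult_right_iff[of "xn1 n" "monom 1 j" "xn1 (i-j) * z"]
    by (simp add: coprime_commute)
  also have "\<dots> \<longleftrightarrow> min_poly_An n z dvd xn1 (i - j)" by (rule minpoly_dvd_iff[OF n])
  finally show ?thesis .
qed

lemma hweight_smult: "\<alpha> \<noteq> 0 \<Longrightarrow> hweight (smult \<alpha> (p::'a::field poly)) = hweight p"
  by (simp add: hweight_def)

lemma shift1:
  fixes z :: "'a::field poly"
  assumes n: "n \<ge> 1" and dz: "degree z < n"
  shows "degree ((monom 1 1 * z) mod xn1 n) < n \<and> hweight ((monom 1 1 * z) mod xn1 n) = hweight z"
proof -
  define c where "c = coeff z (n - 1)"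
  define w where "w = monom 1 1 * z - smult c (xn1 n)"
  have cw: "coeff w j = (if j = 0 then c else if j < n then coeff z (j - 1) else 0)" for j
  proof -
    have "coeff (monom 1 1 * z) j = (if j = 0 then 0 else coeff z (j - 1))"
      by (cases j) (simp_all add: coeff_monom_mult)
    moreover have "coeff z (j - 1) = 0" if "j > n" using that dz by (intro coeff_eq_0) simp
    ultimately show ?thesis using n
      by (auto simp: w_def xn1_def coeff_monom c_def)
  qed
  have dw: "degree w < n"
  proof -
    have "degree w \<le> n - 1" by (rule degree_le) (use n in \<open>auto simp: cw\<close>)
    then show ?thesis using n by simp
  qed
  have e1: "monom 1 1 * z = w + [:c:] * xn1 n" by (simp add: w_def)
  have e2: "(w + [:c:] * xn1 n) mod xn1 n = w mod xn1 n" by (rule mod_mult_self1)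
  have e3: "w mod xn1 n = w" using dw by (intro mod_poly_less) (simp add: degree_xn1[OF n])
  have m: "(monom 1 1 * z) mod xn1 n = w" using e1 e2 e3 by simp
  have supp: "{i. coeff w i \<noteq> 0} = (\<lambda>i. (i + 1) mod n) ` {i. coeff z i \<noteq> 0}"
  proof (intro set_eqI iffI)
    fix j assume "j \<in> {i. coeff w i \<noteq> 0}"
    then have j: "coeff w j \<noteq> 0" by simp
    show "j \<in> (\<lambda>i. (i + 1) mod n) ` {i. coeff z i \<noteq> 0}"
    proof (cases "j = 0")
      case True
      then have "coeff z (n - 1) \<noteq> 0" using j by (simp add: cw c_def)
      moreover have "(n - 1 + 1) mod n = j" using True n by simp
      ultimately show ?thesis by force
    next
      case False
      then have "j < n" "coeff z (j - 1) \<noteq> 0" using j by (auto simp: cw split: if_splits)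
      moreover have "(j - 1 + 1) mod n = j" using False \<open>j < n\<close> by simp
      ultimately show ?thesis by force
    qed
  next
    fix j assume "j \<in> (\<lambda>i. (i + 1) mod n) ` {i. coeff z i \<noteq> 0}"
    then obtain i where i: "coeff z i \<noteq> 0" "j = (i + 1) mod n" by auto
    have "i < n" using i dz le_degree[of z i] by fastforce
    show "j \<in> {i. coeff w i \<noteq> 0}"
    proof (cases "i + 1 = n")
      case True then have "i = n - 1" by simp
      then show ?thesis using i n True by (simp add: cw c_def)
    next
      case False then have "i + 1 < n" using \<open>i < n\<close> by simp
      then show ?thesis using i by (simp add: cw)
    qed
  qed
  have "inj_on (\<lambda>i. (i + 1) mod n) {i. coeff z i \<noteq> 0}"
  proof (rule inj_onI)
    fix a b assume a: "a \<in> {i. coeff z i \<noteq> 0}" and b: "b \<in> {i. coeff z i \<noteq> 0}"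
      and e: "(a + 1) mod n = (b + 1) mod n"
    have "a < n" "b < n" using a b dz le_degree[of z] by fastforce+
    then show "a = b" using e
      by (metis Suc_eq_plus1 Suc_lessI add_right_cancel mod_less mod_self nat.distinct(1)
          less_irrefl)
  qed
  then have "hweight w = hweight z" unfolding hweight_def supp by (rule card_image)
  then show ?thesis using m dw by simp
qed

lemma shift_weight:
  fixes z :: "'a::field poly"
  assumes n: "n \<ge> 1" and dz: "degree z < n"
  shows "hweight ((monom 1 i * z) mod xn1 n) = hweight z"
proof -
  have "degree ((monom 1 i * z) mod xn1 n) < n \<and> hweight ((monom 1 i * z) mod xn1 n) = hweight z"
  proof (induction i)
    case 0
    have "z mod xn1 n = z" using dz by (intro mod_poly_less) (simp add: degree_xn1[OF n])
    then show ?case using dz by simp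
  next
    case (Suc i)
    have "(monom 1 (Suc i) * z) mod xn1 n = (monom 1 1 * ((monom 1 i * z) mod xn1 n)) mod xn1 n"
      by (simp add: mod_mult_right_eq mult_monom mult.assoc[symmetric])
    then show ?case using shift1[OF n, of "(monom 1 i * z) mod xn1 n"] Suc by simp
  qed
  then show ?thesis by simp
qed


lemma monic_irred_coprime:
  fixes p q :: "'a::field_gcd poly"
  assumes "irreducible p" "irreducible q" "lead_coeff p = 1" "lead_coeff q = 1" "p \<noteq> q"
  shows "coprime p q"
proof (rule prime_elem_imp_coprime)
  show "prime_elem p" using assms by (simp add: prime_elem_iff_irreducible)
  show "\<not> p dvd q"
  proof
    assume "p dvd q"
    then obtain r where r: "q = p * r" by blast
    have "\<not> is_unit p" using assms(1) by (simp add: irreducible_def)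
    then have "is_unit r" using assms(2) r by (meson irreducibleD)
    then obtain c where c: "r = [:c:]" by (metis is_unit_poly_iff)
    have "lead_coeff q = lead_coeff p * c" using r c by simp
    then have "c = 1" using assms by simp
    then show False using r c assms(5) by simp
  qed
qed

lemma prod_dvd_pairwise_coprime:
  fixes p :: "'b \<Rightarrow> 'a::field_gcd poly"
  assumes "finite A" "\<And>a. a \<in> A \<Longrightarrow> p a dvd x"
    "\<And>a b. a \<in> A \<Longrightarrow> b \<in> A \<Longrightarrow> a \<noteq> b \<Longrightarrow> coprime (p a) (p b)"
  shows "prod p A dvd x"
  using assms
proof (induction A rule: finite_induct)
  case empty then show ?case by simp
next
  case (insert a A)
  have "coprime (p a) (prod p A)"
    using insert by (intro prod_coprime_right) auto
  moreover have "p a dvd x" "prod p A dvd x" using insert by auto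
  ultimately show ?case using insert by (simp add: divides_mult)
qed

lemma finite_deg: "finite {p :: 'a::{finite,zero} poly. degree p < n}"
proof -
  have "{p :: 'a poly. degree p < n} \<subseteq> Poly ` {xs. set xs \<subseteq> UNIV \<and> length xs = n}"
  proof
    fix p :: "'a poly" assume "p \<in> {p. degree p < n}"
    then have "length (coeffs p) \<le> n"
      by (cases "p = 0") (auto simp: length_coeffs)
    then have "p = Poly (coeffs p @ replicate (n - length (coeffs p)) 0)
       \<and> length (coeffs p @ replicate (n - length (coeffs p)) 0) = n" by simp
    then show "p \<in> Poly ` {xs. set xs \<subseteq> UNIV \<and> length xs = n}" by blast
  qed
  moreover have "finite {xs :: 'a list. set xs \<subseteq> UNIV \<and> length xs = n}"
    by (rule finite_lists_length_eq) simp
  ultimately show ?thesis by (meson finite_imageI finite_subset)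
qed

lemma shift_shift:
  "(monom 1 i * ((monom 1 a * z) mod f)) mod f = (monom 1 (i + a) * z) mod (f :: 'a::field poly)"
  by (simp add: mod_mult_right_eq mult_monom mult.assoc[symmetric])

lemma cycle_facts:
  fixes z :: "'a::field_gcd poly"
  assumes n: "n \<ge> 1" and N: "N > 0" and per: "\<And>e. min_poly_An n z dvd xn1 e \<longleftrightarrow> N dvd e"
    and dz: "degree z < n"
  shows "card (cycle_An n z) = N" "z \<in> cycle_An n z"
    "w \<in> cycle_An n z \<Longrightarrow> cycle_An n w = cycle_An n z"
proof -
  let ?s = "\<lambda>i. (monom 1 i * z) mod xn1 n"
  have eq: "?s i = ?s j \<longleftrightarrow> N dvd (i - j)" if "j \<le> i" for i j
    using shift_eq_iff[OF n that, of z] per by simp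
  have cyc: "cycle_An n z = range ?s" by (auto simp: cycle_An_def)
  have "range ?s = ?s ` {0..<N}"
  proof (intro set_eqI iffI)
    fix u assume "u \<in> range ?s"
    then obtain i where i: "u = ?s i" by blast
    have "?s i = ?s (i mod N)" using eq[of "i mod N" i] by (simp add: minus_mod_eq_mult_div)
    then show "u \<in> ?s ` {0..<N}" using i N by auto
  qed auto
  moreover have "inj_on ?s {0..<N}"
  proof (rule inj_onI)
    fix i j assume i: "i \<in> {0..<N}" and j: "j \<in> {0..<N}" and e: "?s i = ?s j"
    show "i = j"
    proof (cases "j \<le> i")
      case True
      then have d: "N dvd i - j" using eq e by blast
      show ?thesis
      proof (rule ccontr)
        assume "i \<noteq> j"
        then have "0 < i - j" "i - j < N" using True i by auto
        then show False using nat_dvd_not_less d by blast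
      qed
    next
      case False
      then have d: "N dvd j - i" using eq[of i j] e by simp
      show ?thesis
      proof (rule ccontr)
        assume "i \<noteq> j"
        then have "0 < j - i" "j - i < N" using False j by auto
        then show False using nat_dvd_not_less d by blast
      qed
    qed
  qed
  ultimately show "card (cycle_An n z) = N" using cyc by (simp add: card_image)
  have "?s 0 = z" using dz by (simp, intro mod_poly_less) (simp add: degree_xn1[OF n])
  then show "z \<in> cycle_An n z" using cyc by (metis rangeI)
  assume "w \<in> cycle_An n z"
  then obtain a where a: "w = ?s a" using cyc by blast
  show "cycle_An n w = cycle_An n z"
  proof
    show "cycle_An n w \<subseteq> cycle_An n z"
      unfolding cyc by (auto simp: cycle_An_def a shift_shift)
    show "cycle_An n z \<subseteq> cycle_An n w"
    proof
      fix u assume "u \<in> cycle_An n z"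
      then obtain i where i: "u = ?s i" using cyc by blast
      have "?s (i + a * N) = ?s i" using eq[of i "i + a*N"] by simp
      moreover have e3: "i + a * (N - 1) + a = i + a * N" using N by (cases N) auto
      ultimately have "u = (monom 1 (i + a * (N - 1)) * w) mod xn1 n"
        unfolding i a shift_shift e3 by simp
      then show "u \<in> cycle_An n w" by (auto simp: cycle_An_def)
    qed
  qed
qed

lemma prop_facts:
  fixes z :: "'a::{finite,field} poly"
  assumes "z \<noteq> 0"
  shows "card (prop_class z) = CARD('a) - 1" "z \<in> prop_class z"
    "w \<in> prop_class z \<Longrightarrow> prop_class w = prop_class z"
proof -
  have pc: "prop_class z = (\<lambda>\<alpha>. smult \<alpha> z) ` {\<alpha>. \<alpha> \<noteq> 0}" by (auto simp: prop_class_def)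
  have "inj_on (\<lambda>\<alpha>. smult \<alpha> z) {\<alpha>. \<alpha> \<noteq> 0}"
  proof (rule inj_onI)
    fix x y assume "smult x z = smult y z"
    then have "coeff (smult x z) (degree z) = coeff (smult y z) (degree z)" by simp
    then show "x = y" using assms by simp
  qed
  then have "card (prop_class z) = card {\<alpha>::'a. \<alpha> \<noteq> 0}" by (simp add: pc card_image)
  also have "{\<alpha>::'a. \<alpha> \<noteq> 0} = UNIV - {0}" by auto
  finally show "card (prop_class z) = CARD('a) - 1" by simp
  show "z \<in> prop_class z" unfolding prop_class_def by (rule CollectI, rule exI[of _ 1]) simp
  assume "w \<in> prop_class z"
  then obtain \<alpha> where a: "w = smult \<alpha> z" "\<alpha> \<noteq> 0" by (auto simp: prop_class_def)
  show "prop_class w = prop_class z"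
  proof
    show "prop_class w \<subseteq> prop_class z" using a by (auto simp: prop_class_def)
    show "prop_class z \<subseteq> prop_class w"
    proof
      fix u assume "u \<in> prop_class z"
      then obtain \<beta> where b: "u = smult \<beta> z" "\<beta> \<noteq> 0" by (auto simp: prop_class_def)
      have "u = smult (\<beta> / \<alpha>) w" "\<beta> / \<alpha> \<noteq> 0" using a b by auto
      then show "u \<in> prop_class w" unfolding prop_class_def by blast
    qed
  qed
qed

lemma partition_count:
  assumes fin: "finite S" and mem: "\<And>z. z \<in> S \<Longrightarrow> z \<in> P z" and sub: "\<And>z. z \<in> S \<Longrightarrow> P z \<subseteq> S"
    and cd: "\<And>z. z \<in> S \<Longrightarrow> card (P z) = m"
    and same: "\<And>z w. z \<in> S \<Longrightarrow> w \<in> P z \<Longrightarrow> P w = P z"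
  shows "card S = m * card (P ` S)"
proof -
  have U: "\<Union>(P ` S) = S" using mem sub by blast
  have "m * card (P ` S) = card (\<Union>(P ` S))"
  proof (rule card_partition)
    show "finite (P ` S)" using fin by simp
    show "finite (\<Union>(P ` S))" using U fin by simp
    show "\<And>c. c\<in>P ` S \<Longrightarrow> card c = m" using cd by auto
    show "\<And>c1 c2. c1 \<in> P ` S \<Longrightarrow> c2 \<in> P ` S \<Longrightarrow> c1 \<noteq> c2 \<Longrightarrow> c1 \<inter> c2 = {}"
    proof -
      fix c1 c2 assume c1: "c1 \<in> P ` S" and c2: "c2 \<in> P ` S" and ne: "c1 \<noteq> c2"
      show "c1 \<inter> c2 = {}"
      proof (rule ccontr)
        assume "c1 \<inter> c2 \<noteq> {}"
        then obtain u where u: "u \<in> c1" "u \<in> c2" by blast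
        obtain z1 z2 where "z1 \<in> S" "c1 = P z1" "z2 \<in> S" "c2 = P z2" using c1 c2 by blast
        then show False using same u ne by metis
      qed
    qed
  qed
  then show ?thesis using U by simp
qed

lemma arith_lcm:
  fixes a b N s R :: nat
  assumes a: "a > 0" and b: "b > 0" and Ns: "N = s * a" and NR: "N = R * b"
    and alt: "s = b div gcd b a \<or> R = a div gcd b a \<or> coprime s R"
  shows "N = lcm a b"
proof -
  have L: "lcm a b = a * b div gcd b a" by (simp add: lcm_nat_def gcd.commute)
  have ad: "gcd b a dvd a" "gcd b a dvd b" by auto
  have "a dvd N" unfolding Ns by simp
  moreover have "b dvd N" unfolding NR by simp
  ultimately have "lcm a b dvd N" by (simp add: lcm_least)
  then obtain m where m: "N = lcm a b * m" by blast
  consider "s = b div gcd b a" | "R = a div gcd b a" | "coprime s R" using alt by blast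
  then show ?thesis
  proof cases
    case 1 then show ?thesis using Ns L ad by (metis dvd_div_mult mult.commute)
  next
    case 2 then show ?thesis using NR L ad by (metis dvd_div_mult mult.commute)
  next
    case 3
    have l0: "lcm a b > 0" using a b by (simp add: lcm_pos_nat)
    obtain u where u: "lcm a b = a * u" by (meson dvd_lcm1 dvdE)
    obtain v where v: "lcm a b = b * v" by (meson dvd_lcm2 dvdE)
    have "a * s = a * (u * m)" using Ns m u by algebra
    then have "s = u * m" using a by (metis mult_cancel_left not_gr0)
    moreover have "b * R = b * (v * m)" using NR m v by algebra
    then have "R = v * m" using b by (metis mult_cancel_left not_gr0)
    ultimately have "m dvd s" "m dvd R" by auto
    then have "m = 1" using 3 by (metis coprime_common_divisor_nat)
    then show ?thesis using m by simp
  qed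
qed


theorem corollary7:
  fixes h :: "nat \<Rightarrow> 'a::{finite,field_gcd} poly"
    and n t k :: nat and ij :: "nat \<Rightarrow> nat"
    and J C :: "'a poly set"
  assumes q_gt2: "CARD('a) > 2"
    and n_pos: "n \<ge> 1"
    and coprime_nq: "coprime n (CARD('a))"
    and h_irred: "\<And>i. i \<in> {1..t} \<Longrightarrow> irreducible (h i) \<and> lead_coeff (h i) = 1"
    and h_dist: "inj_on h {1..t}"
    and h_dvd: "(\<Prod>i\<in>{1..t}. h i) dvd xn1 n"
    and J_def: "J = code_with_check n (\<Prod>i\<in>{1..t}. h i)"
    and k_gt1: "k > 1"
    and ij_range: "ij ` {1..k} \<subseteq> {1..t}"
    and ij_inj: "inj_on ij {1..k}"
    and non_prim: "\<And>j. j \<in> {1..k} \<Longrightarrow>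
          poly_ord (h (ij j)) \<noteq> CARD('a) ^ degree (h (ij j)) - 1"
    and C_def: "C = {z \<in> J. z \<noteq> 0 \<and> min_poly_An n z = (\<Prod>j\<in>{1..k}. h (ij j))}"
  defines "n_c \<equiv> Lcm ((\<lambda>j. poly_ord (h (ij j))) ` {1..k})"
  defines "d_c \<equiv> gcd (CARD('a) - 1) n_c"
  defines "r_c \<equiv> n_c div d_c"
  defines "b_c \<equiv> (CARD('a) - 1) div d_c"
  defines "s_c \<equiv> card (cycle_An n ` C)"
  defines "R_c \<equiv> card (prop_class ` C)"
  assumes alt: "s_c = b_c \<or> r_c = R_c \<or> coprime s_c R_c"
  shows "\<forall>z\<in>C. \<forall>w\<in>C. hweight z = hweight w"
proof -
  define f :: "'a poly" where "f = xn1 n"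
  define c where "c = (\<Prod>j\<in>{1..k}. h (ij j))"
  define H where "H = (\<Prod>i\<in>{1..t}. h i)"
  have f0: "f \<noteq> 0" using xn1_nz[OF n_pos] by (simp add: f_def)
  have degf: "degree f = n" using degree_xn1[OF n_pos] by (simp add: f_def)
  have hdvd: "h (ij j) dvd xn1 n" if "j \<in> {1..k}" for j
  proof -
    have "ij j \<in> {1..t}" using ij_range that by blast
    then have "h (ij j) dvd (\<Prod>i\<in>{1..t}. h i)" by (intro dvd_prodI) auto
    then show ?thesis using h_dvd dvd_trans by blast
  qed
  have ordiff: "h (ij j) dvd xn1 e \<longleftrightarrow> poly_ord (h (ij j)) dvd e" if "j \<in> {1..k}" for j e
    using poly_ord_dvd_iff(1)[OF n_pos hdvd[OF that]] .
  have ordpos: "poly_ord (h (ij j)) \<ge> 1" if "j \<in> {1..k}" for j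
    using poly_ord_dvd_iff(2)[OF n_pos hdvd[OF that]] .
  have cop: "coprime (h (ij a)) (h (ij b))" if "a \<in> {1..k}" "b \<in> {1..k}" "a \<noteq> b" for a b
  proof -
    have "ij a \<in> {1..t}" "ij b \<in> {1..t}" using ij_range that by blast+
    moreover have "ij a \<noteq> ij b" using ij_inj that by (meson inj_onD)
    ultimately have "h (ij a) \<noteq> h (ij b)" using h_dist by (meson inj_onD)
    then show ?thesis using h_irred \<open>ij a \<in> {1..t}\<close> \<open>ij b \<in> {1..t}\<close>
      by (intro monic_irred_coprime) auto
  qed
  have per: "c dvd xn1 e \<longleftrightarrow> n_c dvd e" for e
  proof
    assume "c dvd xn1 e"
    then have "\<forall>j\<in>{1..k}. poly_ord (h (ij j)) dvd e"
      using ordiff unfolding c_def by (meson dvd_prodI dvd_trans finite_atLeastAtMost)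
    then show "n_c dvd e" unfolding n_c_def by (simp add: Lcm_dvd_iff)
  next
    assume "n_c dvd e"
    then have "\<forall>j\<in>{1..k}. poly_ord (h (ij j)) dvd e"
      unfolding n_c_def by (simp add: Lcm_dvd_iff)
    then show "c dvd xn1 e" unfolding c_def
      by (intro prod_dvd_pairwise_coprime) (auto simp: ordiff cop)
  qed
  have nc_pos: "n_c > 0"
  proof -
    have "0 \<notin> (\<lambda>j. poly_ord (h (ij j))) ` {1..k}" using ordpos by fastforce
    then have "n_c \<noteq> 0" unfolding n_c_def by (subst Lcm_0_iff) auto
    then show ?thesis by simp
  qed
  have q1: "CARD('a) - 1 > 0" using q_gt2 by simp
  have Cz: "degree z < n \<and> z \<noteq> 0 \<and> min_poly_An n z = c \<and> f dvd z * H" if "z \<in> C" for z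
    using that unfolding C_def J_def code_with_check_def c_def H_def f_def by auto
  have Cmem: "z \<in> C" if "degree z < n" "z \<noteq> 0" "min_poly_An n z = c" "f dvd z * H" for z
    using that unfolding C_def J_def code_with_check_def c_def H_def f_def by auto
  have finC: "finite C"
    by (rule finite_subset[OF _ finite_deg[of n]]) (use Cz in auto)
  have sm: "smult \<alpha> z \<in> C" if "z \<in> C" "\<alpha> \<noteq> 0" for z \<alpha>
  proof (rule Cmem)
    show "degree (smult \<alpha> z) < n" using Cz[OF that(1)] by simp
    show "smult \<alpha> z \<noteq> 0" using Cz[OF that(1)] that(2) by simp
    have "gcd (smult \<alpha> z) (xn1 n) = gcd z (xn1 n)"
    proof -
      have "smult \<alpha> z = z * [:\<alpha>:]" by simp
      moreover have "is_unit [:\<alpha>:]" using that(2) by (simp add: is_unit_const_poly_iff dvd_field_iff)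
      ultimately show ?thesis by (metis gcd_mult_unit1)
    qed
    then show "min_poly_An n (smult \<alpha> z) = c" using Cz[OF that(1)] by (simp add: min_poly_An_def)
    show "f dvd smult \<alpha> z * H" using Cz[OF that(1)] by (simp add: dvd_smult)
  qed
  have copf: "coprime f (monom 1 i)" for i
    using coprime_x_xn1[OF n_pos, of i] by (simp add: f_def coprime_commute)
  have sh: "(monom 1 i * z) mod f \<in> C" if "z \<in> C" for z i
  proof (rule Cmem)
    have z: "degree z < n" "z \<noteq> 0" "min_poly_An n z = c" "f dvd z * H" using Cz[OF that] by auto
    show "degree ((monom 1 i * z) mod f) < n"
      using degree_mod_less[OF f0, of "monom 1 i * z"] degf n_pos by auto
    show "(monom 1 i * z) mod f \<noteq> 0"
    proof
      assume "(monom 1 i * z) mod f = 0"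
      then have "f dvd monom 1 i * z" by (simp add: dvd_eq_mod_eq_0)
      then have "f dvd z" using copf[of i] by (simp add: coprime_dvd_mult_right_iff)
      moreover have "z mod f = z" using z(1) degf by (intro mod_poly_less) simp
      ultimately show False using z(2) by (simp add: dvd_eq_mod_eq_0)
    qed
    have "gcd ((monom 1 i * z) mod f) f = gcd z f"
      using f0 copf[of i] by (simp add: gcd_mult_left_left_cancel)
    then show "min_poly_An n ((monom 1 i * z) mod f) = c"
      using z(3) by (simp add: min_poly_An_def f_def)
    have "((monom 1 i * z) mod f * H) mod f = (monom 1 i * (z * H)) mod f"
      by (simp add: mod_mult_left_eq mult.assoc)
    also have "\<dots> = 0" using z(4) by (simp add: dvd_eq_mod_eq_0[symmetric])
    finally show "f dvd (monom 1 i * z) mod f * H" by (simp add: dvd_eq_mod_eq_0)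
  qed
  have perz: "min_poly_An n z dvd xn1 e \<longleftrightarrow> n_c dvd e" if "z \<in> C" for z e
    using Cz[OF that] per by simp
  have cnt: "card S = n_c * card (cycle_An n ` S) \<and> card S = (CARD('a) - 1) * card (prop_class ` S)"
    if S: "S \<subseteq> C" and csh: "\<And>z i. z \<in> S \<Longrightarrow> (monom 1 i * z) mod f \<in> S"
      and csm: "\<And>z \<alpha>. z \<in> S \<Longrightarrow> \<alpha> \<noteq> 0 \<Longrightarrow> smult \<alpha> z \<in> S" for S
  proof
    have finS: "finite S" using S finC finite_subset by blast
    show "card S = n_c * card (cycle_An n ` S)"
    proof (rule partition_count[OF finS])
      fix z assume "z \<in> S"
      then have zC: "z \<in> C" using S by auto
      note cf = cycle_facts[OF n_pos nc_pos perz[OF zC] conjunct1[OF Cz[OF zC]]]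
      show "z \<in> cycle_An n z" by (rule cf(2))
      show "card (cycle_An n z) = n_c" by (rule cf(1))
      show "cycle_An n z \<subseteq> S" using csh \<open>z \<in> S\<close> by (auto simp: cycle_An_def f_def)
      fix w assume "w \<in> cycle_An n z"
      then show "cycle_An n w = cycle_An n z" by (rule cf(3))
    qed
    show "card S = (CARD('a) - 1) * card (prop_class ` S)"
    proof (rule partition_count[OF finS])
      fix z assume "z \<in> S"
      then have zC: "z \<in> C" using S by auto
      note pf = prop_facts[OF conjunct1[OF conjunct2[OF Cz[OF zC]]]]
      show "z \<in> prop_class z" by (rule pf(2))
      show "card (prop_class z) = CARD('a) - 1" by (rule pf(1))
      show "prop_class z \<subseteq> S" using csm \<open>z \<in> S\<close> by (auto simp: prop_class_def)
      fix w assume "w \<in> prop_class z"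
      then show "prop_class w = prop_class z" by (rule pf(3))
    qed
  qed
  have cntC: "card C = n_c * s_c" "card C = (CARD('a) - 1) * R_c"
    using cnt[of C] sh sm unfolding s_c_def R_c_def by auto
  have cardC: "card C = lcm n_c (CARD('a) - 1)"
  proof (rule arith_lcm[OF nc_pos q1])
    show "card C = s_c * n_c" "card C = R_c * (CARD('a) - 1)" using cntC by (simp_all add: mult.commute)
    show "s_c = (CARD('a) - 1) div gcd (CARD('a) - 1) n_c \<or> R_c = n_c div gcd (CARD('a) - 1) n_c
       \<or> coprime s_c R_c"
      using alt unfolding b_c_def r_c_def d_c_def by auto
  qed
  show ?thesis
  proof (intro ballI)
    fix z w assume z: "z \<in> C" and w: "w \<in> C"
    define Orb where "Orb = {smult \<alpha> ((monom 1 i * z) mod f) | \<alpha> i. \<alpha> \<noteq> 0}"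
    have OC: "Orb \<subseteq> C" unfolding Orb_def using sm sh z by auto
    have zO: "z \<in> Orb"
    proof -
      have "z mod f = z" using Cz[OF z] degf by (intro mod_poly_less) simp
      then have "z = smult 1 ((monom 1 0 * z) mod f)" by simp
      then show ?thesis unfolding Orb_def by (intro CollectI exI[of _ 1] exI[of _ 0]) simp
    qed
    have csh: "(monom 1 i * u) mod f \<in> Orb" if uO: "u \<in> Orb" for u i
    proof -
      obtain \<alpha> j where u: "u = smult \<alpha> ((monom 1 j * z) mod f)" "\<alpha> \<noteq> 0"
        using uO unfolding Orb_def by blast
      have "(monom 1 i * u) mod f = smult \<alpha> ((monom 1 i * ((monom 1 j * z) mod f)) mod f)"
        by (simp add: u mod_smult_left)
      also have "\<dots> = smult \<alpha> ((monom 1 (i + j) * z) mod f)" by (simp add: shift_shift)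
      finally show ?thesis using u(2) unfolding Orb_def by blast
    qed
    have csm: "smult \<beta> u \<in> Orb" if uO: "u \<in> Orb" and b0: "\<beta> \<noteq> 0" for u \<beta>
    proof -
      obtain \<alpha> j where u: "u = smult \<alpha> ((monom 1 j * z) mod f)" "\<alpha> \<noteq> 0"
        using uO unfolding Orb_def by blast
      have "smult \<beta> u = smult (\<beta> * \<alpha>) ((monom 1 j * z) mod f)" by (simp add: u)
      then show ?thesis using u(2) b0 unfolding Orb_def by fastforce
    qed
    have cO: "card Orb = n_c * card (cycle_An n ` Orb)" "card Orb = (CARD('a) - 1) * card (prop_class ` Orb)"
      using cnt[OF OC csh csm] by auto
    have finO: "finite Orb" using OC finC finite_subset by blast
    have "lcm n_c (CARD('a) - 1) dvd card Orb"
      using cO by (metis dvd_triv_left lcm_least)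
    moreover have "card Orb > 0" using finO zO card_gt_0_iff by blast
    ultimately have "card C \<le> card Orb" using cardC by (simp add: dvd_imp_le)
    then have "Orb = C" using OC finC by (meson card_seteq)
    then have "w \<in> Orb" using w by simp
    then obtain \<alpha> i where wa: "w = smult \<alpha> ((monom 1 i * z) mod f)" "\<alpha> \<noteq> 0"
      unfolding Orb_def by blast
    have "hweight w = hweight ((monom 1 i * z) mod f)" using wa by (simp add: hweight_smult)
    also have "\<dots> = hweight z" unfolding f_def using Cz[OF z] by (intro shift_weight[OF n_pos]) simp
    finally show "hweight z = hweight w" by simp
  qed
qed

end
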